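(* Let $n,m,k$ be positive integers, let $X\in\mathbb{R}^{n\times n}$ be symmetric, let $\Lambda:\mathbb{R}^{n\times n}\to\mathbb{R}^{m\times m}$ be a linear map and $Y\in\mathbb{R}^{m\times m}$. Consider \[ (\mathrm{P})\qquad \max_{\rho\in\mathbb{R}^{n\times n}}\ \operatorname{Tr}(X\rho)\quad\text{s.t.}\quad \Lambda(\rho)=Y,\ \operatorname{Tr}(\rho)=1,\ \rho\ge 0,\ \operatorname{rank}(\rho)\le k . \] Let $\mathcal{H}_A=\mathcal{H}_B=\mathbb{R}^n\otimes\mathbb{R}^k$ (so operators on $\mathcal{H}_A\otimes\mathcal{H}_B$ are $(nk)^2\times(nk)^2$ matrices), $\widetilde{X}=X\otimes\mathbb{1}_k$ and $\widetilde{\Lambda}(\cdot)=\Lambda[\operatorname{Tr}_2(\cdot)]$ with $\operatorname{Tr}_2$ the partial trace over the factor $\mathbb{R}^k$. Then (P) is equivalent to (has the same optimal value as) the conic program over real matrices $\Phi_{AB}$ \[ \max_{\Phi_{AB}}\ \operatorname{Tr}\big[(\widetilde{X}_A\otimes\mathbb{1}_B)\Phi_{AB}\big]\quad\text{s.t.}\quad \Phi_{AB}\in\mathrm{SEP},\ \operatorname{Tr}(\Phi_{AB})=1,\ V_{AB}\Phi_{AB}=\Phi_{AB},\ \Phi_{AB}^{T_A}=\Phi_{AB}, \] \[ (\widetilde{\Lambda}_A\otimes\mathrm{id}_B)(\Phi_{AB})=Y\otimes\operatorname{Tr}_A(\Phi_{AB}). \]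
   Context: $\mathrm{SEP}$ is the complex separable cone: the convex hull of $\{M_A\otimes N_B: M_A\ge0,N_B\ge0\}$ with $M_A,N_B$ complex positive semidefinite $nk\times nk$ matrices; the constraint requires the real matrix $\Phi_{AB}$ to lie in this cone. $V_{AB}$ is the swap of the two tensor factors. $\Phi_{AB}^{T_A}$ denotes the partial transpose on the first factor $\mathcal{H}_A$ with respect to the standard basis. A subscript $A$ (resp. $B$) indicates action on the first (resp. second) factor, $\mathrm{id}_B$ is the identity map, $\operatorname{Tr}_A$ the partial trace over the first factor. *)

theory Defs
  imports "HOL-Analysis.Analysis"
begin

text \<open>Finite-dimensional spaces are indexed by finite types: R^n by 'n, R^k by 'k,
  R^m by 'm (so n = CARD('n) etc.).  H_A = H_B = R^n (x) R^k is indexed by 'n \<times> 'k,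
  and H_A (x) H_B by ('n \<times> 'k) \<times> ('n \<times> 'k).\<close>

definition kron :: "'a::times^'p::finite^'p \<Rightarrow> 'a^'q::finite^'q \<Rightarrow> 'a^('p \<times> 'q)^('p \<times> 'q)" where
  "kron M N = (\<chi> u v. M $ fst u $ fst v * N $ snd u $ snd v)"

definition psd_real :: "real^'p::finite^'p \<Rightarrow> bool" where
  "psd_real M \<longleftrightarrow> transpose M = M \<and> (\<forall>x::real^'p. 0 \<le> x \<bullet> (M *v x))"

definition psd_complex :: "complex^'p::finite^'p \<Rightarrow> bool" where
  "psd_complex M \<longleftrightarrow> (\<forall>i j. M $ i $ j = cnj (M $ j $ i)) \<and>
     (\<forall>x::complex^'p. 0 \<le> Re (\<Sum>i\<in>UNIV. \<Sum>j\<in>UNIV. cnj (x $ i) * M $ i $ j * x $ j))"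

definition SEP :: "(complex^('p::finite \<times> 'p)^('p \<times> 'p)) set" where
  "SEP = {\<Phi>. \<exists>(r::nat) (c::nat \<Rightarrow> real) (M::nat \<Rightarrow> complex^'p^'p) (N::nat \<Rightarrow> complex^'p^'p).
             (\<forall>j<r. 0 \<le> c j \<and> psd_complex (M j) \<and> psd_complex (N j)) \<and>
             (\<Sum>j<r. c j) = 1 \<and>
             \<Phi> = (\<Sum>j<r. c j *\<^sub>R kron (M j) (N j))}"

definition cmat :: "real^'p::finite^'q::finite \<Rightarrow> complex^'p^'q" where
  "cmat A = (\<chi> i j. complex_of_real (A $ i $ j))"

definition ptrace2 :: "'a::comm_monoid_add^('p::finite \<times> 'q::finite)^('p \<times> 'q) \<Rightarrow> 'a^'p^'p" where
  "ptrace2 A = (\<chi> i j. \<Sum>a\<in>UNIV. A $ (i, a) $ (j, a))"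

definition ptrace1 :: "'a::comm_monoid_add^('p::finite \<times> 'q::finite)^('p \<times> 'q) \<Rightarrow> 'a^'q^'q" where
  "ptrace1 A = (\<chi> i j. \<Sum>a\<in>UNIV. A $ (a, i) $ (a, j))"

definition swap_op :: "'a::zero_neq_one^('p::finite \<times> 'p)^('p \<times> 'p)" where
  "swap_op = (\<chi> u v. if fst u = snd v \<and> snd u = fst v then 1 else 0)"

definition ptransA :: "'a^('p::finite \<times> 'q::finite)^('p \<times> 'q) \<Rightarrow> 'a^('p \<times> 'q)^('p \<times> 'q)" where
  "ptransA A = (\<chi> u v. A $ (fst v, snd u) $ (fst u, snd v))"

text \<open>(L_A (x) id_B) applied to an operator on H_A (x) H_B, for a linear map L.\<close>
definition map_A :: "('a^'p::finite^'p \<Rightarrow> 'a^'r::finite^'r) \<Rightarrow> 'a^('p \<times> 'q::finite)^('p \<times> 'q) \<Rightarrow> 'a^('r \<times> 'q)^('r \<times> 'q)" where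
  "map_A L A = (\<chi> u v. L (\<chi> p p'. A $ (p, snd u) $ (p', snd v)) $ fst u $ fst v)"

end

theory Submission
  imports Defs
begin

definition router :: "real^'p::finite \<Rightarrow> real^'p^'p" where
  "router v = (\<chi> i j. v$i * v$j)"

lemma qf_expand: "x \<bullet> (M *v y) = (\<Sum>i\<in>UNIV. \<Sum>j\<in>UNIV. x$i * M$i$j * y$j)"
  for x y :: "real^'p::finite" and M :: "real^'p^'p"
  by (simp add: inner_vec_def matrix_vector_mult_def sum_distrib_left mult.assoc)

lemma qf_axis: "axis i 1 \<bullet> (M *v axis j 1) = M$i$j" for M :: "real^'p::finite^'p"
  by (simp add: matrix_vector_mult_basis inner_axis' column_def)

lemma psd_sym: "psd_real M \<Longrightarrow> M$j$i = M$i$j"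
  unfolding psd_real_def by (metis transpose_def vec_lambda_beta)

lemma psd_diag: "psd_real M \<Longrightarrow> 0 \<le> M$i$i"
  unfolding psd_real_def by (metis qf_axis)

lemma psd_zero_diag:
  assumes "psd_real M" "M$j$j = 0" shows "M$i$j = 0"
proof (cases "i = j")
  case True then show ?thesis using assms by simp
next
  case False
  have sym: "M$j$i = M$i$j" using psd_sym[OF assms(1)] .
  have d: "0 \<le> M$i$i" using psd_diag[OF assms(1)] .
  have q: "0 \<le> 2 * t * M$i$j + t^2 * M$i$i" for t
  proof -
    let ?x = "axis j 1 + t *\<^sub>R axis i (1::real)"
    have "0 \<le> ?x \<bullet> (M *v ?x)" using assms(1) unfolding psd_real_def by blast
    also have "?x \<bullet> (M *v ?x) = M$j$j + t * M$j$i + t * M$i$j + t^2 * M$i$i"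
      by (simp add: matrix_vector_right_distrib matrix_vector_mult_scaleR inner_add_left inner_add_right qf_axis power2_eq_square algebra_simps)
    finally show ?thesis using assms(2) sym by simp
  qed
  define a where "a = M$i$j"
  define d' where "d' = M$i$i"
  define t where "t = -a/(d'+1)"
  have dd: "d' + 1 \<noteq> 0" using d unfolding d'_def by simp
  have tt: "t * (d'+1) = -a" unfolding t_def using dd by simp
  have "0 \<le> 2 * t * a + t^2 * d'" using q[of t] by (simp add: a_def d'_def)
  hence "0 \<le> (2 * t * a + t^2 * d') * (d'+1)^2" by simp
  also have "(2 * t * a + t^2 * d') * (d'+1)^2 = 2*a*(d'+1)*(t*(d'+1)) + d'*(t*(d'+1))^2"
    by (simp add: power2_eq_square algebra_simps)
  also have "\<dots> = - (a * a) * (d' + 2)" unfolding tt by (simp add: power2_eq_square algebra_simps)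
  finally have "(a * a) * (d'+2) \<le> 0" by simp
  moreover have "d' + 2 > 0" using d by (simp add: d'_def)
  ultimately have "a * a \<le> 0" by (meson less_le_not_le mult_le_0_iff)
  hence "a * a = 0" using zero_le_square[of a] by linarith
  thus ?thesis unfolding a_def by simp
qed

lemma router_mult: "router v *v x = (v \<bullet> x) *\<^sub>R v"
  by (simp add: router_def matrix_vector_mult_def inner_vec_def vec_eq_iff sum_distrib_left algebra_simps)

lemma range_subspace: "subspace (range (\<lambda>x. (A::real^'n::finite^'m::finite) *v x))"
  unfolding subspace_def
  by (metis (no_types, lifting) matrix_vector_mult_0_right matrix_vector_right_distrib matrix_vector_mult_scaleR rangeE rangeI)

lemma real_chol_step:
  fixes M :: "real^'p::finite^'p"
  assumes psd: "psd_real M" and pos: "M$i$i > 0"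
  defines "v \<equiv> (\<chi> a. M$a$i / sqrt (M$i$i))"
  shows "psd_real (M - router v)" and "rank (M - router v) < rank M"
proof -
  define d where "d = M$i$i"
  define s where "s = sqrt d"
  have d0: "d > 0" using pos d_def by simp
  have s0: "s > 0" using d0 s_def by simp
  have ss: "s * s = d" using d0 s_def by simp
  have sym: "\<And>a b. M$b$a = M$a$b" using psd_sym[OF psd] by blast
  have vx: "v \<bullet> x = (M *v x)$i / s" for x
    by (simp add: v_def inner_vec_def matrix_vector_mult_def sum_divide_distrib s_def d_def sym algebra_simps)
  have vx': "x \<bullet> v = (M *v x)$i / s" for x using vx[of x] by (simp add: inner_commute)
  have Mei: "M *v axis i 1 = s *\<^sub>R v"
    using s0 by (simp add: v_def matrix_vector_mult_basis column_def vec_eq_iff s_def d_def)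
  have xMe: "x \<bullet> (M *v axis i 1) = (M *v x)$i" for x
    by (simp only: matrix_vector_mult_basis) (simp add: column_def inner_vec_def matrix_vector_mult_def sym mult.commute)
  have eMx: "axis i 1 \<bullet> (M *v x) = (M *v x)$i" for x
    by (simp add: inner_axis')
  show "psd_real (M - router v)"
    unfolding psd_real_def
  proof (intro conjI allI)
    show "transpose (M - router v) = M - router v"
      using psd unfolding psd_real_def by (simp add: transpose_def router_def vec_eq_iff mult.commute)
  next
    fix x :: "real^'p"
    define c where "c = (M *v x)$i / d"
    define y where "y = x - c *\<^sub>R axis i 1"
    have "0 \<le> y \<bullet> (M *v y)" using psd unfolding psd_real_def by blast
    also have "y \<bullet> (M *v y) = x \<bullet> (M *v x) - 2 * c * (M *v x)$i + c * c * d"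
    proof -
      have "y \<bullet> (M *v y) = x \<bullet> (M *v x) - c*(x \<bullet> (M *v axis i 1)) - c*(axis i 1 \<bullet> (M *v x)) + c*c*(axis i 1 \<bullet> (M *v axis i 1))"
        unfolding y_def
        by (simp add: matrix_vector_mult_diff_distrib matrix_vector_mult_scaleR inner_diff_left inner_diff_right algebra_simps)
      thus ?thesis unfolding xMe eMx d_def by (simp add: matrix_vector_mult_basis column_def)
    qed
    also have "\<dots> = x \<bullet> ((M - router v) *v x)"
      using d0 ss by (simp add: matrix_vector_mult_diff_rdistrib router_mult inner_diff_right vx vx' c_def power2_eq_square field_simps)
    finally show "0 \<le> x \<bullet> ((M - router v) *v x)" .
  qed
  have sub: "range (\<lambda>x. (M - router v) *v x) \<subseteq> range (\<lambda>x. M *v x)"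
  proof clarify
    fix x
    have "(M - router v) *v x = M *v (x - ((v \<bullet> x) / s) *\<^sub>R axis i 1)"
      using s0 by (simp add: matrix_vector_mult_diff_rdistrib matrix_vector_mult_diff_distrib router_mult matrix_vector_mult_scaleR Mei)
    thus "(M - router v) *v x \<in> range (\<lambda>x. M *v x)" by blast
  qed
  have vin: "v \<in> range (\<lambda>x. M *v x)"
  proof
    show "v = M *v ((1/s) *\<^sub>R axis i 1)" using s0 by (simp add: matrix_vector_mult_scaleR Mei)
  qed simp
  have vout: "v \<notin> range (\<lambda>x. (M - router v) *v x)"
  proof
    assume "v \<in> range (\<lambda>x. (M - router v) *v x)"
    then obtain z where z: "v = (M - router v) *v z" by blast
    have row: "(M - router v)$i = 0"
    proof -
      have "(M - router v)$i$b = 0" for b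
        using d0 ss by (simp add: router_def v_def sym s_def[symmetric] d_def[symmetric] field_simps)
      thus ?thesis by (simp add: vec_eq_iff)
    qed
    have "v$i = ((M - router v) *v z)$i" using z by simp
    also have "\<dots> = 0" by (simp only: matrix_vector_mul_component row) simp
    finally have "v$i = 0" .
    moreover have "v$i = s" using ss s0 by (simp add: v_def s_def[symmetric] d_def[symmetric] field_simps)
    ultimately show False using s0 by simp
  qed
  have "span (range (\<lambda>x. (M - router v) *v x)) \<subset> span (range (\<lambda>x. M *v x))"
    using sub vin vout by (simp add: span_eq_iff[THEN iffD2, OF range_subspace]) blast
  thus "rank (M - router v) < rank M"
    unfolding rank_dim_range by (rule dim_psubset)
qed

lemma router_0[simp]: "router 0 = 0"
  by (simp add: router_def vec_eq_iff)

lemma psd_all_diag_zero: "psd_real M \<Longrightarrow> \<forall>i. M$i$i = 0 \<Longrightarrow> M = 0"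
  using psd_zero_diag by (simp add: vec_eq_iff) blast

lemma real_chol:
  fixes M :: "real^'p::finite^'p"
  assumes "psd_real M" "rank M \<le> CARD('k::finite)"
  shows "\<exists>v::'k \<Rightarrow> real^'p. M = (\<Sum>l\<in>UNIV. router (v l)) \<and> card {l. v l \<noteq> 0} \<le> rank M"
  using assms
proof (induction "rank M" arbitrary: M rule: less_induct)
  case less
  show ?case
  proof (cases "M = 0")
    case True
    then show ?thesis by (intro exI[of _ "\<lambda>_. 0"]) simp
  next
    case False
    then obtain i where i: "M$i$i \<noteq> 0" using psd_all_diag_zero[OF less.prems(1)] by blast
    hence pos: "M$i$i > 0" using psd_diag[OF less.prems(1), of i] by simp
    define v0 where "v0 = (\<chi> a. M$a$i / sqrt (M$i$i))"
    define M' where "M' = M - router v0"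
    have psd': "psd_real M'" and lt: "rank M' < rank M"
      using real_chol_step[OF less.prems(1) pos] unfolding M'_def v0_def by auto
    obtain v' :: "'k \<Rightarrow> real^'p" where v': "M' = (\<Sum>l\<in>UNIV. router (v' l))" "card {l. v' l \<noteq> 0} \<le> rank M'"
      using less.hyps[OF lt psd'] lt less.prems(2) by fastforce
    have "{l. v' l \<noteq> 0} \<noteq> UNIV" 
    proof
      assume "{l. v' l \<noteq> 0} = UNIV"
      hence "CARD('k) \<le> rank M'" using v'(2) by simp
      thus False using lt less.prems(2) by linarith
    qed
    then obtain l0 where l0: "v' l0 = 0" by blast
    define v where "v = v'(l0 := v0)"
    have "(\<Sum>l\<in>UNIV. router (v l)) = router (v l0) + (\<Sum>l\<in>UNIV - {l0}. router (v l))"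
      by (simp add: sum.remove)
    also have "(\<Sum>l\<in>UNIV - {l0}. router (v l)) = (\<Sum>l\<in>UNIV - {l0}. router (v' l))"
      by (rule sum.cong) (auto simp: v_def)
    also have "\<dots> = (\<Sum>l\<in>UNIV. router (v' l))"
      using l0 by (simp add: sum.remove[of UNIV l0])
    finally have sumeq: "(\<Sum>l\<in>UNIV. router (v l)) = M" using v'(1) unfolding M'_def v_def
      by (simp add: algebra_simps)
    have "{l. v l \<noteq> 0} \<subseteq> insert l0 {l. v' l \<noteq> 0}" by (auto simp: v_def)
    hence "card {l. v l \<noteq> 0} \<le> card (insert l0 {l. v' l \<noteq> 0})" by (simp add: card_mono)
    also have "\<dots> \<le> Suc (card {l. v' l \<noteq> 0})" by (simp add: card_insert_le_m1)
    finally have "card {l. v l \<noteq> 0} \<le> rank M" using v'(2) lt by linarith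
    with sumeq show ?thesis by metis
  qed
qed

lemma sum_UNIV_prod: "(\<Sum>u\<in>(UNIV::('a::finite \<times> 'b::finite) set). f u) = (\<Sum>a\<in>UNIV. \<Sum>b\<in>UNIV. f (a,b))"
  by (simp add: UNIV_Times_UNIV[symmetric] sum.cartesian_product del: UNIV_Times_UNIV)

lemma kron_mult:
  fixes A C :: "'a::comm_semiring_1^'p::finite^'p" and B D :: "'a^'q::finite^'q"
  shows "kron A B ** kron C D = kron (A ** C) (B ** D)"
  by (simp add: kron_def matrix_matrix_mult_def vec_eq_iff sum_UNIV_prod sum_product algebra_simps)

lemma trace_kron:
  fixes A :: "'a::comm_semiring_1^'p::finite^'p" and B :: "'a^'q::finite^'q"
  shows "trace (kron A B) = trace A * trace B"
  by (simp add: kron_def trace_def sum_UNIV_prod sum_product)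

lemma trace_kron_id:
  fixes X :: "'a::comm_semiring_1^'n::finite^'n" and R :: "'a^('n \<times> 'k::finite)^('n \<times> 'k)"
  shows "trace (kron X (mat 1 :: 'a^'k^'k) ** R) = trace (X ** ptrace2 R)"
proof -
  have "trace (kron X (mat 1 :: 'a^'k^'k) ** R) = (\<Sum>i\<in>UNIV. \<Sum>l\<in>UNIV. \<Sum>j\<in>UNIV. \<Sum>l'\<in>UNIV. X$i$j * (if l = l' then 1 else 0) * R$(j,l')$(i,l))"
    by (simp add: trace_def matrix_matrix_mult_def kron_def sum_UNIV_prod mat_def)
  also have "\<dots> = (\<Sum>i\<in>UNIV. \<Sum>l\<in>UNIV. \<Sum>j\<in>UNIV. X$i$j * R$(j,l)$(i,l))"
    by (simp add: if_distrib if_distribR cong: if_cong)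
  also have "\<dots> = trace (X ** ptrace2 R)"
    by (simp add: trace_def matrix_matrix_mult_def ptrace2_def sum_distrib_left)
       (metis (no_types, lifting) sum.cong sum.swap)
  finally show ?thesis .
qed

lemma swap_mult: "(swap_op :: 'a::comm_semiring_1^('p::finite \<times> 'p)^('p \<times> 'p)) ** A = (\<chi> u v. A $ (snd u, fst u) $ v)"
proof -
  have "(\<Sum>w\<in>UNIV. (if fst u = snd w \<and> snd u = fst w then 1 else 0) * A$w$v) = A $ (snd u, fst u) $ v" for u v
  proof -
    have "(\<Sum>w\<in>UNIV. (if fst u = snd w \<and> snd u = fst w then 1 else 0) * A$w$v) = (\<Sum>w\<in>UNIV. if w = (snd u, fst u) then A$w$v else 0)"
      by (rule sum.cong) auto
    thus ?thesis by simp
  qed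
  thus ?thesis by (simp add: swap_op_def matrix_matrix_mult_def vec_eq_iff)
qed

lemma trace_ptrace2: "trace (ptrace2 A) = trace (A::'a::comm_semiring_1^('p::finite \<times> 'q::finite)^('p \<times> 'q))"
  by (simp add: trace_def ptrace2_def sum_UNIV_prod)

lemma trace_ptrace1: "trace (ptrace1 A) = trace (A::'a::comm_semiring_1^('p::finite \<times> 'q::finite)^('p \<times> 'q))"
  by (simp add: trace_def ptrace1_def sum_UNIV_prod) (rule sum.swap)

lemma psd_cmat_router: "psd_complex (cmat (router v))"
  unfolding psd_complex_def
proof (intro conjI allI)
  fix i j show "cmat (router v) $ i $ j = cnj (cmat (router v) $ j $ i)"
    by (simp add: cmat_def router_def mult.commute)
next
  fix x :: "complex^'a"
  define S where "S = (\<Sum>i\<in>UNIV. complex_of_real (v$i) * x$i)"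
  have "(\<Sum>i\<in>UNIV. \<Sum>j\<in>UNIV. cnj (x $ i) * cmat (router v) $ i $ j * x $ j) = cnj S * S"
    by (simp add: S_def cmat_def router_def sum_distrib_left sum_distrib_right sum_product algebra_simps)
  also have "\<dots> = complex_of_real ((cmod S)^2)" by (metis complex_norm_square mult.commute)
  finally show "0 \<le> Re (\<Sum>i\<in>UNIV. \<Sum>j\<in>UNIV. cnj (x $ i) * cmat (router v) $ i $ j * x $ j)" by simp
qed

lemma cmat_kron: "cmat (kron A B) = kron (cmat A) (cmat B)"
  by (simp add: cmat_def kron_def vec_eq_iff)

lemma primal_to_conic:
  fixes X :: "real^'n::finite^'n" and Lambda :: "real^'n^'n \<Rightarrow> real^'m::finite^'m"
    and Y :: "real^'m^'m" and \<rho> :: "real^'n^'n"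
  assumes lin: "linear Lambda" and feas: "Lambda \<rho> = Y" "trace \<rho> = 1" "psd_real \<rho>" "rank \<rho> \<le> CARD('k::finite)"
  shows "\<exists>\<Phi>. trace (kron (kron X (mat 1 :: real^'k^'k)) (mat 1 :: real^('n \<times> 'k)^('n \<times> 'k)) ** \<Phi>) = trace (X ** \<rho>) \<and>
     cmat \<Phi> \<in> SEP \<and> trace \<Phi> = 1 \<and> swap_op ** \<Phi> = \<Phi> \<and> ptransA \<Phi> = \<Phi> \<and>
     map_A (\<lambda>\<sigma>. Lambda (ptrace2 \<sigma>)) \<Phi> = kron Y (ptrace1 \<Phi>)"
proof -
  obtain v :: "'k \<Rightarrow> real^'n" where v: "\<rho> = (\<Sum>l\<in>UNIV. router (v l))"
    using real_chol[OF feas(3,4)] by blast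
  define \<psi> :: "real^('n \<times> 'k)" where "\<psi> = (\<chi> u. v (snd u) $ fst u)"
  define P where "P = router \<psi>"
  define \<Phi> where "\<Phi> = kron P P"
  have rho_ent: "\<rho>$i$j = (\<Sum>l\<in>UNIV. v l $ i * v l $ j)" for i j
    unfolding v by (simp add: sum_component router_def)
  have pt: "ptrace2 P = \<rho>"
    by (simp add: vec_eq_iff ptrace2_def P_def router_def \<psi>_def rho_ent)
  have trP: "trace P = 1" using trace_ptrace2[of P] pt feas(2) by simp
  have symP: "P$b$a = P$a$b" for a b by (simp add: P_def router_def mult.commute)
  have obj: "trace (kron (kron X (mat 1 :: real^'k^'k)) (mat 1 :: real^('n \<times> 'k)^('n \<times> 'k)) ** \<Phi>) = trace (X ** \<rho>)"
    unfolding \<Phi>_def kron_mult trace_kron trace_kron_id pt using trP by simp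
  have sep: "cmat \<Phi> \<in> SEP"
    unfolding SEP_def
    apply (rule CollectI)
    apply (rule exI[of _ 1], rule exI[of _ "\<lambda>_. 1"], rule exI[of _ "\<lambda>_. cmat P"], rule exI[of _ "\<lambda>_. cmat P"])
    by (simp add: P_def psd_cmat_router \<Phi>_def cmat_kron)
  have trF: "trace \<Phi> = 1" unfolding \<Phi>_def trace_kron trP by simp
  have sw: "swap_op ** \<Phi> = \<Phi>"
    unfolding swap_mult by (simp add: vec_eq_iff \<Phi>_def kron_def P_def router_def)
  have ptA: "ptransA \<Phi> = \<Phi>"
    by (simp add: vec_eq_iff \<Phi>_def kron_def ptransA_def symP)
  have mA: "map_A (\<lambda>\<sigma>. Lambda (ptrace2 \<sigma>)) \<Phi> = kron Y (ptrace1 \<Phi>)"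
  proof -
    have blk: "(\<chi> p p'. \<Phi> $ (p, q) $ (p', q')) = P$q$q' *\<^sub>R P" for q q'
      by (simp add: vec_eq_iff \<Phi>_def kron_def)
    have pt1: "ptrace1 \<Phi> = P"
      using trP by (simp add: vec_eq_iff \<Phi>_def kron_def ptrace1_def trace_def sum_distrib_right[symmetric])
    have "ptrace2 (c *\<^sub>R P) = c *\<^sub>R \<rho>" for c
      using pt by (simp add: vec_eq_iff ptrace2_def sum_distrib_left[symmetric])
    hence L: "Lambda (ptrace2 (c *\<^sub>R P)) = c *\<^sub>R Y" for c
      using linear_cmul[OF lin] feas(1) by simp
    show ?thesis
      unfolding map_A_def blk pt1 L
      by (simp add: vec_eq_iff kron_def mult.commute)
  qed
  show ?thesis using obj sep trF sw ptA mA by blast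
qed

definition couter :: "complex^'p::finite \<Rightarrow> complex^'p^'p" where
  "couter v = (\<chi> i j. v$i * cnj (v$j))"

definition cq :: "complex^'p::finite^'p \<Rightarrow> complex^'p \<Rightarrow> complex^'p \<Rightarrow> complex" where
  "cq M x y = (\<Sum>a\<in>UNIV. \<Sum>b\<in>UNIV. cnj (x$a) * M$a$b * y$b)"

lemma cq_add1: "cq M (x + y) z = cq M x z + cq M y z"
  by (simp add: cq_def algebra_simps sum.distrib)
lemma cq_add2: "cq M z (x + y) = cq M z x + cq M z y"
  by (simp add: cq_def algebra_simps sum.distrib)
lemma cq_axis1: "cq M (axis i c) z = cnj c * (\<Sum>b\<in>UNIV. M$i$b * z$b)"
proof -
  have "\<forall>a. (\<Sum>b\<in>UNIV. cnj (axis i c $ a) * M$a$b * z$b) = (if a = i then cnj c * (\<Sum>b\<in>UNIV. M$i$b*z$b) else 0)"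
    by (simp add: axis_def sum_distrib_left mult.assoc)
  thus ?thesis unfolding cq_def by simp
qed
lemma sum_axis_r: "(\<Sum>b\<in>UNIV. f b * axis j c $ b) = f j * (c::'a::comm_ring_1)"
  by (simp add: axis_def if_distrib cong: if_cong)
lemma sum_axis_l: "(\<Sum>b\<in>UNIV. cnj (axis j c $ b) * f b) = cnj c * f j"
proof -
  have "(\<Sum>b\<in>UNIV. cnj (axis j c $ b) * f b) = (\<Sum>b\<in>UNIV. if b = j then cnj c * f b else 0)"
    by (rule sum.cong) (auto simp: axis_def)
  thus ?thesis by simp
qed
lemma cq_axis2: "cq M z (axis j c) = (\<Sum>a\<in>UNIV. cnj (z$a) * M$a$j) * c"
  by (simp add: cq_def axis_def if_distrib if_distribR sum_distrib_right cong: if_cong)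
lemma cq_diff_mat: "cq (A - B) x y = cq A x y - cq B x y"
  by (simp add: cq_def algebra_simps sum_subtractf)

lemma psdc_herm: "psd_complex M \<Longrightarrow> M$i$j = cnj (M$j$i)"
  unfolding psd_complex_def by blast

lemma psdc_form: "psd_complex M \<Longrightarrow> 0 \<le> Re (cq M x x)"
  unfolding psd_complex_def cq_def by blast

lemma psdc_diag_real: "psd_complex M \<Longrightarrow> M$i$i = complex_of_real (Re (M$i$i))"
  using psdc_herm[of M i i] by (metis Reals_cnj_iff complex_is_Real_iff of_real_Re)

lemma psdc_diag: "psd_complex M \<Longrightarrow> 0 \<le> Re (M$i$i)"
  using psdc_form[of M "axis i 1"] by (simp add: cq_axis1 sum_axis_r)

lemma psdc_zero_diag:
  assumes psd: "psd_complex M" and z: "M$j$j = 0" shows "M$i$j = 0"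
proof (cases "i = j")
  case True then show ?thesis using z by simp
next
  case False
  define m where "m = M$i$j"
  define a where "a = (cmod m)^2"
  define d where "d = Re (M$i$i)"
  have d0: "0 \<le> d" using psdc_diag[OF psd] d_def by simp
  have Mii: "M$i$i = complex_of_real d" using psdc_diag_real[OF psd] d_def by simp
  have Mji: "M$j$i = cnj m" using psdc_herm[OF psd, of j i] m_def by simp
  have q: "0 \<le> a * (t*t*d - 2*t)" for t :: real
  proof -
    define s where "s = - complex_of_real t * m"
    let ?y = "axis j 1 + axis i s"
    have "0 \<le> Re (cq M ?y ?y)" by (rule psdc_form[OF psd])
    also have "cq M ?y ?y = M$j$j + M$j$i * s + cnj s * M$i$j + cnj s * M$i$i * s"
      using False by (simp only: cq_add1 cq_add2) (simp add: cq_axis1 cq_axis2 sum_axis_r sum_axis_l axis_nth)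
    also have "\<dots> = (m * cnj m) * complex_of_real (t*t*d - 2*t)"
      unfolding z Mji Mii s_def m_def[symmetric]
      by (simp add: algebra_simps)
    also have "m * cnj m = complex_of_real a" unfolding a_def by (metis complex_norm_square)
    also have "complex_of_real a * complex_of_real (t*t*d - 2*t) = complex_of_real (a * (t*t*d - 2*t))" by simp
    finally show ?thesis by simp
  qed
  have a0: "0 \<le> a" by (simp add: a_def)
  have "0 \<le> a * ((1/(d+1))*(1/(d+1))*d - 2*(1/(d+1)))" using q .
  also have "(1/(d+1))*(1/(d+1))*d - 2*(1/(d+1)) = - (d+2) / ((d+1)*(d+1))"
  proof -
    have dp: "d + 1 \<noteq> 0" using d0 by simp
    show ?thesis using dp by (simp add: divide_simps)
  qed
  finally have "0 \<le> a * (- (d+2) / ((d+1)*(d+1)))" .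
  moreover have "- (d+2) / ((d+1)*(d+1)) < 0" using d0 by (simp add: field_simps add_pos_nonneg)
  ultimately have "a \<le> 0" by (metis linorder_not_le mult_pos_neg)
  hence "a = 0" using a0 by simp
  thus ?thesis by (simp add: a_def m_def)
qed

lemma cchol_step:
  fixes M :: "complex^'p::finite^'p"
  assumes psd: "psd_complex M" and pos: "Re (M$i$i) > 0"
  defines "v \<equiv> (\<chi> a. M$a$i / complex_of_real (sqrt (Re (M$i$i))))"
  shows "psd_complex (M - couter v)" and "(M - couter v)$i$i = 0"
    and "\<And>j. M$j$j = 0 \<Longrightarrow> (M - couter v)$j$j = 0"
proof -
  define d where "d = Re (M$i$i)"
  define s where "s = sqrt d"
  have d0: "d > 0" using pos d_def by simp
  have s0: "s > 0" using d0 s_def by simp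
  have ss: "s * s = d" using d0 s_def by simp
  have Mii: "M$i$i = complex_of_real d" using psdc_diag_real[OF psd] d_def by simp
  have herm: "\<And>a b. M$a$b = cnj (M$b$a)" using psdc_herm[OF psd] by blast
  have vdef: "v$a = M$a$i / complex_of_real s" for a by (simp add: v_def s_def d_def)
  have cv: "couter v $ a $ b = M$a$i * M$i$b / complex_of_real d" for a b
  proof -
    have "couter v $ a $ b = M$a$i * cnj (M$b$i) / (complex_of_real s * complex_of_real s)"
      by (simp add: couter_def vdef)
    also have "complex_of_real s * complex_of_real s = complex_of_real d" using ss by (metis of_real_mult)
    also have "cnj (M$b$i) = M$i$b" using herm[of i b] by simp
    finally show ?thesis .
  qed
  show "psd_complex (M - couter v)"
    unfolding psd_complex_def
  proof (intro conjI allI)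
    fix a b show "(M - couter v) $ a $ b = cnj ((M - couter v) $ b $ a)"
      using herm[of a b] by (simp add: couter_def)
  next
    fix x :: "complex^'p"
    define w where "w = (\<Sum>b\<in>UNIV. M$i$b * x$b)"
    define c where "c = w / complex_of_real d"
    define y where "y = x + axis i (-c)"
    have wc: "(\<Sum>a\<in>UNIV. cnj (x$a) * M$a$i) = cnj w"
      unfolding w_def by (simp add: herm[of _ i] mult.commute)
    have "cq M y y = cq M x x + cq M x (axis i (-c)) + (cq M (axis i (-c)) x + cq M (axis i (-c)) (axis i (-c)))"
      unfolding y_def by (simp only: cq_add1 cq_add2) (simp add: algebra_simps)
    also have "\<dots> = cq M x x - cnj w * c - cnj c * w + cnj c * complex_of_real d * c"
    proof -
      have e1: "cq M x (axis i (-c)) = cnj w * (-c)" unfolding cq_axis2 wc ..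
      have e2: "cq M (axis i (-c)) x = cnj (-c) * w" unfolding cq_axis1 w_def ..
      have e3: "cq M (axis i (-c)) (axis i (-c)) = cnj (-c) * (M$i$i * (-c))" unfolding cq_axis1 sum_axis_r ..
      show ?thesis unfolding e1 e2 e3 Mii by (simp add: algebra_simps)
    qed
    also have "\<dots> = cq M x x - cnj w * w / complex_of_real d"
    proof -
      have D: "complex_of_real d \<noteq> 0" using d0 by simp
      have cc: "cnj c = cnj w / complex_of_real d" by (simp add: c_def)
      have f1: "cnj c * complex_of_real d * c = cnj w * c" using D by (simp add: cc)
      have f2: "cnj c * w = cnj w * c" by (simp add: cc c_def)
      have f3: "cnj w * c = cnj w * w / complex_of_real d" by (simp add: c_def)
      show ?thesis unfolding f1 f2 f3 by simp
    qed
    finally have cy: "cq M y y = cq M x x - cnj w * w / complex_of_real d" .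
    have "cq (couter v) x x = cnj w * w / complex_of_real d"
    proof -
      have "cnj w * w / complex_of_real d = (\<Sum>a\<in>UNIV. cnj (x$a) * M$a$i) * (\<Sum>b\<in>UNIV. M$i$b * x$b) / complex_of_real d"
        unfolding wc w_def[symmetric] ..
      also have "\<dots> = (\<Sum>a\<in>UNIV. \<Sum>b\<in>UNIV. (cnj (x$a) * M$a$i) * (M$i$b * x$b) / complex_of_real d)"
        by (simp only: sum_product sum_divide_distrib)
      also have "\<dots> = cq (couter v) x x"
        unfolding cq_def cv by (intro sum.cong refl) (simp add: algebra_simps)
      finally show ?thesis by simp
    qed
    hence "cq (M - couter v) x x = cq M y y" unfolding cq_diff_mat cy by simp
    thus "0 \<le> Re (\<Sum>a\<in>UNIV. \<Sum>b\<in>UNIV. cnj (x $ a) * (M - couter v) $ a $ b * x $ b)"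
      using psdc_form[OF psd, of y] unfolding cq_def by simp
  qed
  show "(M - couter v)$i$i = 0" using d0 by (simp add: cv Mii)
  fix j assume "M$j$j = 0"
  hence z1: "M$i$j = 0" using psdc_zero_diag[OF psd] by blast
  hence "M$j$i = 0" using herm[of j i] by simp
  note z1 this
  thus "(M - couter v)$j$j = 0" using \<open>M$j$j = 0\<close> by (simp add: cv)
qed

lemma psdc_all_diag_zero: "psd_complex M \<Longrightarrow> \<forall>i. M$i$i = 0 \<Longrightarrow> M = 0"
  using psdc_zero_diag by (simp add: vec_eq_iff) blast

lemma cchol:
  fixes M :: "complex^'p::finite^'p"
  assumes "psd_complex M"
  shows "\<exists>r (v::nat \<Rightarrow> complex^'p). M = (\<Sum>l<r. couter (v l))"
  using assms
proof (induction "card {i. M$i$i \<noteq> 0}" arbitrary: M rule: less_induct)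
  case less
  show ?case
  proof (cases "\<forall>i. M$i$i = 0")
    case True
    then show ?thesis using psdc_all_diag_zero[OF less.prems] by (intro exI[of _ 0]) simp
  next
    case False
    then obtain i where i: "M$i$i \<noteq> 0" by blast
    have "Re (M$i$i) \<noteq> 0" using i psdc_diag_real[OF less.prems, of i] by (metis of_real_0)
    hence pos: "Re (M$i$i) > 0" using psdc_diag[OF less.prems, of i] by simp
    define v0 where "v0 = (\<chi> a. M$a$i / complex_of_real (sqrt (Re (M$i$i))))"
    define M' where "M' = M - couter v0"
    note st = cchol_step[OF less.prems pos, folded v0_def M'_def]
    have "{j. M'$j$j \<noteq> 0} \<subset> {j. M$j$j \<noteq> 0}"
      using st(2,3) i by blast
    hence lt: "card {j. M'$j$j \<noteq> 0} < card {j. M$j$j \<noteq> 0}" by (simp add: psubset_card_mono)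
    obtain r :: nat and v' where v': "M' = (\<Sum>l<r. couter (v' l))" using less.hyps[OF lt st(1)] by blast
    define v where "v = v'(r := v0)"
    have "(\<Sum>l<Suc r. couter (v l)) = (\<Sum>l<r. couter (v' l)) + couter v0"
      by (simp add: v_def)
    also have "\<dots> = M" unfolding v'[symmetric] M'_def by simp
    finally have "M = (\<Sum>l<Suc r. couter (v l))" by simp
    thus ?thesis by blast
  qed
qed

definition tensor :: "complex^'p::finite \<Rightarrow> complex^'q::finite \<Rightarrow> complex^('p \<times> 'q)" where
  "tensor x y = (\<chi> u. x$(fst u) * y$(snd u))"

lemma kron_couter: "kron (couter x) (couter y) = couter (tensor x y)"
  by (simp add: kron_def couter_def tensor_def vec_eq_iff)

lemma kron_sum_left: "kron (\<Sum>i\<in>I. f i) B = (\<Sum>i\<in>I. kron (f i) B)"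
  for f :: "'i \<Rightarrow> 'a::comm_semiring_1^'p::finite^'p" and B :: "'a^'q::finite^'q"
  by (simp add: kron_def vec_eq_iff sum_component sum_distrib_right)

lemma kron_sum_right: "kron A (\<Sum>i\<in>I. f i) = (\<Sum>i\<in>I. kron A (f i))"
  for f :: "'i \<Rightarrow> 'a::comm_semiring_1^'q::finite^'q" and A :: "'a^'p::finite^'p"
  by (simp add: kron_def vec_eq_iff sum_component sum_distrib_left)

lemma scaleR_kron_couter':
  fixes s :: real
  shows "(s * s) *\<^sub>R kron (couter x) (couter y) = couter (tensor (s *\<^sub>R x) y)"
  by (simp add: kron_def couter_def tensor_def vec_eq_iff)

lemma scaleR_kron_couter:
  assumes "0 \<le> c"
  shows "c *\<^sub>R kron (couter x) (couter y) = couter (tensor (sqrt c *\<^sub>R x) y)"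
  using scaleR_kron_couter'[of "sqrt c" x y] assms by simp

lemma sep_decomp:
  fixes \<Phi> :: "complex^('p::finite \<times> 'p)^('p \<times> 'p)"
  assumes "\<Phi> \<in> SEP"
  shows "\<exists>T (x :: nat \<times> nat \<times> nat \<Rightarrow> complex^'p) y. finite T \<and> \<Phi> = (\<Sum>t\<in>T. couter (tensor (x t) (y t)))"
proof -
  obtain r :: nat and c :: "nat \<Rightarrow> real" and M N :: "nat \<Rightarrow> complex^'p^'p" where cond: "\<forall>j<r. 0 \<le> c j \<and> psd_complex (M j) \<and> psd_complex (N j)"
    and Phi: "\<Phi> = (\<Sum>j<r. c j *\<^sub>R kron (M j) (N j))"
    using assms unfolding SEP_def mem_Collect_eq by (elim exE conjE) (rule that, assumption+)
  have ex: "\<exists>p :: nat \<times> (nat \<Rightarrow> complex^'p). A = (\<Sum>a<fst p. couter (snd p a))" if A: "psd_complex A" for A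
  proof -
    obtain rr :: nat and vv where "A = (\<Sum>a<rr. couter (vv a))" using cchol[OF A] by blast
    thus ?thesis by (intro exI[of _ "(rr,vv)"]) simp
  qed
  have "\<forall>j\<in>{..<r}. \<exists>p :: nat \<times> (nat \<Rightarrow> complex^'p). M j = (\<Sum>a<fst p. couter (snd p a))"
    using cond ex by blast
  from bchoice[OF this] obtain fm :: "nat \<Rightarrow> nat \<times> (nat \<Rightarrow> complex^'p)" where fm: "\<forall>j\<in>{..<r}. M j = (\<Sum>a<fst (fm j). couter (snd (fm j) a))"
    by blast
  have "\<forall>j\<in>{..<r}. \<exists>p :: nat \<times> (nat \<Rightarrow> complex^'p). N j = (\<Sum>a<fst p. couter (snd p a))"
    using cond ex by blast
  from bchoice[OF this] obtain fn :: "nat \<Rightarrow> nat \<times> (nat \<Rightarrow> complex^'p)" where fn: "\<forall>j\<in>{..<r}. N j = (\<Sum>a<fst (fn j). couter (snd (fn j) a))"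
    by blast
  define T :: "(nat \<times> nat \<times> nat) set" where "T = (SIGMA j:{..<r}. SIGMA a:{..<fst (fm j)}. {..<fst (fn j)})"
  define x :: "nat \<times> nat \<times> nat \<Rightarrow> complex^'p" where "x t = sqrt (c (fst t)) *\<^sub>R snd (fm (fst t)) (fst (snd t))" for t
  define y :: "nat \<times> nat \<times> nat \<Rightarrow> complex^'p" where "y t = snd (fn (fst t)) (snd (snd t))" for t
  have "\<Phi> = (\<Sum>j<r. \<Sum>a<fst (fm j). \<Sum>b<fst (fn j). couter (tensor (sqrt (c j) *\<^sub>R snd (fm j) a) (snd (fn j) b)))"
    unfolding Phi
  proof (rule sum.cong[OF refl])
    fix j assume j: "j \<in> {..<r}"
    have "c j *\<^sub>R kron (M j) (N j) = (\<Sum>a<fst (fm j). \<Sum>b<fst (fn j). c j *\<^sub>R kron (couter (snd (fm j) a)) (couter (snd (fn j) b)))"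
    proof -
      have MJ: "M j = (\<Sum>a<fst (fm j). couter (snd (fm j) a))" using fm j by blast
      have NJ: "N j = (\<Sum>a<fst (fn j). couter (snd (fn j) a))" using fn j by blast
      show ?thesis unfolding MJ kron_sum_left unfolding NJ kron_sum_right scaleR_sum_right ..
    qed
    also have "\<dots> = (\<Sum>a<fst (fm j). \<Sum>b<fst (fn j). couter (tensor (sqrt (c j) *\<^sub>R snd (fm j) a) (snd (fn j) b)))"
      using cond j by (simp add: scaleR_kron_couter)
    finally show "c j *\<^sub>R kron (M j) (N j) = \<dots>" .
  qed
  also have "\<dots> = (\<Sum>j<r. \<Sum>z\<in>{..<fst (fm j)} \<times> {..<fst (fn j)}. couter (tensor (sqrt (c j) *\<^sub>R snd (fm j) (fst z)) (snd (fn j) (snd z))))"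
    by (simp only: sum.cartesian_product case_prod_unfold)
  also have "\<dots> = (\<Sum>t\<in>T. couter (tensor (x t) (y t)))"
    unfolding T_def x_def y_def
    by (subst sum.Sigma) (auto simp: split_beta)
  finally have eq: "\<Phi> = (\<Sum>t\<in>T. couter (tensor (x t) (y t)))" .
  have fin: "finite T" unfolding T_def by auto
  show ?thesis using eq fin by blast
qed

lemma sum_sq_zero:
  fixes z :: "'i \<Rightarrow> complex"
  assumes "finite T" "(\<Sum>t\<in>T. z t * cnj (z t)) = 0" "t \<in> T"
  shows "z t = 0"
proof -
  have "(\<Sum>t\<in>T. z t * cnj (z t)) = (\<Sum>t\<in>T. complex_of_real ((cmod (z t))^2))"
    by (intro sum.cong refl) (metis complex_norm_square)
  also have "\<dots> = complex_of_real (\<Sum>t\<in>T. (cmod (z t))^2)" by simp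
  finally have "(\<Sum>t\<in>T. z t * cnj (z t)) = complex_of_real (\<Sum>t\<in>T. (cmod (z t))^2)" .
  hence "(\<Sum>t\<in>T. (cmod (z t))^2) = 0" using assms(2) by (metis of_real_eq_0_iff)
  hence "(cmod (z t))^2 = 0" using assms(1,3) by (simp add: sum_nonneg_eq_0_iff)
  thus ?thesis by simp
qed

lemma cmat_sum_entry:
  assumes "cmat \<Phi> = (\<Sum>t\<in>T. couter (w t))"
  shows "complex_of_real (\<Phi>$u$v) = (\<Sum>t\<in>T. w t $ u * cnj (w t $ v))"
proof -
  have "cmat \<Phi> $ u $ v = (\<Sum>t\<in>T. couter (w t)) $ u $ v" using assms by simp
  thus ?thesis by (simp add: cmat_def sum_component couter_def)
qed

lemma swap_sym:
  fixes \<Phi> :: "real^('p::finite \<times> 'p)^('p \<times> 'p)" and w :: "'i \<Rightarrow> complex^('p \<times> 'p)"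
  assumes fin: "finite T" and dec: "cmat \<Phi> = (\<Sum>t\<in>T. couter (w t))" and sw: "swap_op ** \<Phi> = \<Phi>"
    and t: "t \<in> T"
  shows "w t $ (a,b) = w t $ (b,a)"
proof -
  have swe: "\<Phi>$(snd u, fst u)$v = \<Phi>$u$v" for u v
  proof -
    have "(\<chi> u v. \<Phi> $ (snd u, fst u) $ v) $ u $ v = \<Phi>$u$v" using sw unfolding swap_mult by simp
    thus ?thesis by simp
  qed
  define u where "u = (a,b)"
  define su where "su = (b,a)"
  have e1: "\<Phi>$u$v = \<Phi>$su$v" for v using swe[of su v] unfolding u_def su_def by simp
  note E = cmat_sum_entry[OF dec]
  have "(\<Sum>t\<in>T. (w t $ u - w t $ su) * cnj (w t $ u - w t $ su))
      = (\<Sum>t\<in>T. w t $ u * cnj (w t $ u)) - (\<Sum>t\<in>T. w t $ u * cnj (w t $ su))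
        - (\<Sum>t\<in>T. w t $ su * cnj (w t $ u)) + (\<Sum>t\<in>T. w t $ su * cnj (w t $ su))"
    by (simp add: algebra_simps sum.distrib sum_subtractf)
  also have "\<dots> = complex_of_real (\<Phi>$u$u) - complex_of_real (\<Phi>$u$su) - complex_of_real (\<Phi>$su$u) + complex_of_real (\<Phi>$su$su)"
    unfolding E ..
  also have "\<dots> = 0" unfolding e1[of u] e1[of su] by simp
  finally have "w t $ u - w t $ su = 0" using sum_sq_zero[OF fin _ t, of "\<lambda>t. w t $ u - w t $ su"] by simp
  thus ?thesis unfolding u_def su_def by simp
qed

lemma vec_scaleR_c: "(s *\<^sub>R x) $ a = complex_of_real s * (x $ a :: complex)"
  by (subst vector_scaleR_component) (rule scaleR_conv_of_real)

lemma sym_prod_decomp: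
  fixes x y :: "complex^'p::finite"
  assumes sym: "\<And>a b. x$a * y$b = x$b * y$a"
  shows "\<exists>z. couter (tensor x y) = couter (tensor z z)"
proof (cases "x = 0")
  case True
  then show ?thesis by (intro exI[of _ 0]) (simp add: couter_def tensor_def vec_eq_iff)
next
  case False
  then obtain a0 where a0: "x$a0 \<noteq> 0" by (auto simp: vec_eq_iff)
  define l where "l = y$a0 / x$a0"
  have yl: "y$b = l * x$b" for b using sym[of a0 b] a0 unfolding l_def by (simp add: field_simps)
  define s where "s = sqrt (cmod l)"
  have ss: "s * s = cmod l" unfolding s_def by simp
  have ll: "l * cnj l = complex_of_real s * complex_of_real s * complex_of_real s * complex_of_real s"
  proof -
    have "l * cnj l = complex_of_real ((cmod l)^2)" by (metis complex_norm_square)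
    also have "(cmod l)^2 = s * s * s * s" using ss by (simp add: power2_eq_square)
    finally show ?thesis by simp
  qed
  define z where "z = (\<chi> a. complex_of_real s * x$a)"
  have "\<forall>u v. couter (tensor x y) $ u $ v = couter (tensor z z) $ u $ v"
  proof (intro allI)
    fix u v :: "'p \<times> 'p"
    have "couter (tensor x y) $ u $ v = x$(fst u) * y$(snd u) * cnj (x$(fst v) * y$(snd v))"
      by (simp add: couter_def tensor_def)
    also have "\<dots> = (l * cnj l) * (x$(fst u) * x$(snd u) * cnj (x$(fst v)) * cnj (x$(snd v)))"
      by (simp add: yl mult_ac)
    also have "\<dots> = z$(fst u) * z$(snd u) * cnj (z$(fst v) * z$(snd v))"
      unfolding ll by (simp add: z_def mult_ac)
    also have "\<dots> = couter (tensor z z) $ u $ v" by (simp add: couter_def tensor_def)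
    finally show "couter (tensor x y) $ u $ v = couter (tensor z z) $ u $ v" .
  qed
  hence "couter (tensor x y) = couter (tensor z z)" by (simp add: vec_eq_iff)
  thus ?thesis by blast
qed

lemma conic_sym_decomp:
  fixes \<Phi> :: "real^('p::finite \<times> 'p)^('p \<times> 'p)" and x y :: "'i \<Rightarrow> complex^'p"
  assumes fin: "finite T" and dec: "cmat \<Phi> = (\<Sum>t\<in>T. couter (tensor (x t) (y t)))"
    and sw: "swap_op ** \<Phi> = \<Phi>"
  shows "\<exists>z :: 'i \<Rightarrow> complex^'p. cmat \<Phi> = (\<Sum>t\<in>T. couter (tensor (z t) (z t)))"
proof -
  have "\<forall>t\<in>T. \<exists>z. couter (tensor (x t) (y t)) = couter (tensor z z)"
  proof
    fix t assume t: "t \<in> T"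
    have "x t $ a * y t $ b = x t $ b * y t $ a" for a b
      using swap_sym[OF fin dec sw t, of a b] by (simp add: tensor_def)
    thus "\<exists>z. couter (tensor (x t) (y t)) = couter (tensor z z)" by (rule sym_prod_decomp)
  qed
  from bchoice[OF this] obtain z :: "'i \<Rightarrow> complex^'p" where z: "\<forall>t\<in>T. couter (tensor (x t) (y t)) = couter (tensor (z t) (z t))"
    by blast
  have "cmat \<Phi> = (\<Sum>t\<in>T. couter (tensor (z t) (z t)))" unfolding dec using z by (intro sum.cong) auto
  thus ?thesis by blast
qed

lemma real_phase:
  fixes z :: "complex^'p::finite"
  assumes re: "\<And>a b. z$a * cnj (z$b) = cnj (z$a * cnj (z$b))"
  shows "\<exists>\<phi> :: real^'p. \<forall>a b. z$a * cnj (z$b) = complex_of_real (\<phi>$a * \<phi>$b)"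
proof (cases "z = 0")
  case True
  then show ?thesis by (intro exI[of _ 0]) simp
next
  case False
  then obtain a0 where a0: "z$a0 \<noteq> 0" by (auto simp: vec_eq_iff)
  define n where "n = cmod (z$a0)"
  have n0: "n > 0" using a0 n_def by simp
  define \<phi> :: "real^'p" where "\<phi> = (\<chi> b. Re (z$b * cnj (z$a0)) / n)"
  have rr: "z$b * cnj (z$a0) = complex_of_real (Re (z$b * cnj (z$a0)))" for b
    using re[of b a0] by (metis Reals_cnj_iff complex_is_Real_iff of_real_Re)
  have nn: "complex_of_real (n * n) = z$a0 * cnj (z$a0)"
    unfolding n_def by (metis complex_norm_square of_real_mult power2_eq_square)
  have "z$a * cnj (z$b) = complex_of_real (\<phi>$a * \<phi>$b)" for a b
  proof -
    have "complex_of_real (\<phi>$a * \<phi>$b * (n * n)) = complex_of_real (Re (z$a * cnj (z$a0))) * complex_of_real (Re (z$b * cnj (z$a0)))"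
      using n0 by (simp add: \<phi>_def)
    also have "\<dots> = (z$a * cnj (z$a0)) * cnj (z$b * cnj (z$a0))"
      using rr[of a] rr[of b] by (metis complex_cnj_complex_of_real)
    also have "\<dots> = (z$a * cnj (z$b)) * complex_of_real (n * n)"
      unfolding nn by (simp add: mult_ac)
    finally have "complex_of_real (\<phi>$a * \<phi>$b) * complex_of_real (n * n) = (z$a * cnj (z$b)) * complex_of_real (n * n)"
      by (simp add: mult_ac)
    moreover have "complex_of_real (n * n) \<noteq> 0" using n0 by simp
    ultimately show ?thesis by simp
  qed
  thus ?thesis by blast
qed

lemma real_decomp:
  fixes \<Phi> :: "real^('p::finite \<times> 'p)^('p \<times> 'p)" and z :: "'i \<Rightarrow> complex^'p"
  assumes fin: "finite T" and dec: "cmat \<Phi> = (\<Sum>t\<in>T. couter (tensor (z t) (z t)))"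
    and ptA: "ptransA \<Phi> = \<Phi>"
  shows "\<exists>\<phi> :: 'i \<Rightarrow> real^'p. \<Phi> = (\<Sum>t\<in>T. kron (router (\<phi> t)) (router (\<phi> t)))"
proof -
  have E: "complex_of_real (\<Phi>$u$v) = (\<Sum>t\<in>T. z t $ fst u * z t $ snd u * (cnj (z t $ fst v) * cnj (z t $ snd v)))" for u v
    using cmat_sum_entry[OF dec, of u v] by (simp add: tensor_def)
  have symm: "\<Phi>$v$u = \<Phi>$u$v" for u v
  proof -
    have "complex_of_real (\<Phi>$v$u) = cnj (complex_of_real (\<Phi>$u$v))"
      unfolding E by (simp add: mult_ac)
    thus ?thesis by simp
  qed
  have pt: "\<Phi>$u$v = \<Phi>$(fst v, snd u)$(fst u, snd v)" for u v
  proof -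
    have "ptransA \<Phi> $ u $ v = \<Phi>$u$v" using ptA by simp
    thus ?thesis by (simp add: ptransA_def)
  qed
  have real: "z t $ a * cnj (z t $ b) = cnj (z t $ a * cnj (z t $ b))" if t: "t \<in> T" for t a b
  proof -
    define p where "p t = z t $ a * cnj (z t $ b)" for t
    have "(\<Sum>t\<in>T. (p t - cnj (p t)) * cnj (p t - cnj (p t)))
        = 2 * (\<Sum>t\<in>T. p t * cnj (p t)) - (\<Sum>t\<in>T. p t * p t) - (\<Sum>t\<in>T. cnj (p t) * cnj (p t))"
      by (simp add: algebra_simps sum.distrib sum_subtractf sum_distrib_left)
    also have "(\<Sum>t\<in>T. p t * cnj (p t)) = complex_of_real (\<Phi>$(a,b)$(b,a))"
      unfolding E p_def by (simp add: mult_ac)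
    also have "(\<Sum>t\<in>T. p t * p t) = complex_of_real (\<Phi>$(a,a)$(b,b))"
      unfolding E p_def by (simp add: mult_ac)
    also have "(\<Sum>t\<in>T. cnj (p t) * cnj (p t)) = complex_of_real (\<Phi>$(b,b)$(a,a))"
      unfolding E p_def by (simp add: mult_ac)
    also have "\<Phi>$(a,b)$(b,a) = \<Phi>$(b,b)$(a,a)" using pt[of "(a,b)" "(b,a)"] by simp
    also have "\<Phi>$(b,b)$(a,a) = \<Phi>$(a,a)$(b,b)" by (rule symm)
    finally have "(\<Sum>t\<in>T. (p t - cnj (p t)) * cnj (p t - cnj (p t))) = 0" by simp
    hence "p t - cnj (p t) = 0" using sum_sq_zero[OF fin _ t, of "\<lambda>t. p t - cnj (p t)"] by simp
    thus ?thesis unfolding p_def by simp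
  qed
  have "\<forall>t\<in>T. \<exists>\<phi> :: real^'p. \<forall>a b. z t $ a * cnj (z t $ b) = complex_of_real (\<phi>$a * \<phi>$b)"
    using real_phase real by blast
  from bchoice[OF this] obtain \<phi> :: "'i \<Rightarrow> real^'p"
    where phi: "\<forall>t\<in>T. \<forall>a b. z t $ a * cnj (z t $ b) = complex_of_real (\<phi> t $a * \<phi> t $b)" by blast
  have "\<Phi>$u$v = (\<Sum>t\<in>T. kron (router (\<phi> t)) (router (\<phi> t))) $ u $ v" for u v
  proof -
    have "complex_of_real (\<Phi>$u$v) = (\<Sum>t\<in>T. (z t $ fst u * cnj (z t $ fst v)) * (z t $ snd u * cnj (z t $ snd v)))"
      unfolding E by (simp add: mult_ac)
    also have "\<dots> = (\<Sum>t\<in>T. complex_of_real (\<phi> t $ fst u * \<phi> t $ fst v) * complex_of_real (\<phi> t $ snd u * \<phi> t $ snd v))"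
      using phi by (intro sum.cong refl) simp
    also have "\<dots> = complex_of_real ((\<Sum>t\<in>T. kron (router (\<phi> t)) (router (\<phi> t))) $ u $ v)"
      by (simp add: sum_component kron_def router_def)
    finally show ?thesis by (simp only: of_real_eq_iff)
  qed
  hence "\<Phi> = (\<Sum>t\<in>T. kron (router (\<phi> t)) (router (\<phi> t)))" by (simp add: vec_eq_iff)
  thus ?thesis by blast
qed

definition Emat :: "'p::finite \<Rightarrow> 'p \<Rightarrow> real^'p^'p" where
  "Emat q q' = (\<chi> a b. if a = q then (if b = q' then 1 else 0) else 0)"

lemma mat_expand: "A = (\<Sum>q\<in>UNIV. \<Sum>q'\<in>UNIV. A$q$q' *\<^sub>R Emat q q')" for A :: "real^'p::finite^'p"
proof -
  have "(\<Sum>q\<in>UNIV. \<Sum>q'\<in>UNIV. A$q$q' *\<^sub>R Emat q q') $ a $ b = A$a$b" for a b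
  proof -
    have "(\<Sum>q\<in>UNIV. \<Sum>q'\<in>UNIV. A$q$q' *\<^sub>R Emat q q') $ a $ b = (\<Sum>q\<in>UNIV. \<Sum>q'\<in>UNIV. A$q$q' * (if a = q then (if b = q' then 1 else 0) else 0))"
      by (simp add: sum_component Emat_def)
    also have "\<dots> = (\<Sum>q\<in>UNIV. \<Sum>q'\<in>UNIV. if q = a then (if q' = b then A$q$q' else 0) else 0)"
      by (intro sum.cong refl) auto
    also have "\<dots> = (\<Sum>q\<in>UNIV. if q = a then A$q$b else 0)"
      by (intro sum.cong refl) simp
    also have "\<dots> = A$a$b" by simp
    finally show ?thesis .
  qed
  thus ?thesis by (simp add: vec_eq_iff)
qed

lemma linear_G:
  fixes Lambda :: "real^'n::finite^'n \<Rightarrow> real^'m::finite^'m" and Y :: "real^'m^'m"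
  assumes lin: "linear Lambda"
  shows "linear (\<lambda>\<sigma> :: real^('n \<times> 'k::finite)^('n \<times> 'k). Lambda (ptrace2 \<sigma>) - trace \<sigma> *\<^sub>R Y)"
proof (rule linearI)
  fix x y :: "real^('n \<times> 'k)^('n \<times> 'k)" and c :: real
  have p1: "ptrace2 (x + y) = ptrace2 x + ptrace2 y"
    by (simp add: ptrace2_def vec_eq_iff sum.distrib)
  have p2: "ptrace2 (c *\<^sub>R x) = c *\<^sub>R ptrace2 x"
    by (simp add: ptrace2_def vec_eq_iff sum_distrib_left)
  have t2: "trace (c *\<^sub>R x) = c * trace x"
    by (simp add: trace_def sum_distrib_left)
  show "Lambda (ptrace2 (x + y)) - trace (x + y) *\<^sub>R Y = (Lambda (ptrace2 x) - trace x *\<^sub>R Y) + (Lambda (ptrace2 y) - trace y *\<^sub>R Y)"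
    unfolding p1 trace_add linear_add[OF lin] by (simp add: algebra_simps)
  show "Lambda (ptrace2 (c *\<^sub>R x)) - trace (c *\<^sub>R x) *\<^sub>R Y = c *\<^sub>R (Lambda (ptrace2 x) - trace x *\<^sub>R Y)"
    unfolding p2 t2 linear_cmul[OF lin] by (simp add: algebra_simps)
qed

lemma lambda_constraint:
  fixes Lambda :: "real^'n::finite^'n \<Rightarrow> real^'m::finite^'m" and Y :: "real^'m^'m"
    and \<Phi> :: "real^((('n \<times> 'k::finite) \<times> ('n \<times> 'k)))^((('n \<times> 'k) \<times> ('n \<times> 'k)))"
    and \<phi> :: "'i \<Rightarrow> real^('n \<times> 'k)"
  assumes lin: "linear Lambda" and fin: "finite T"
    and dec: "\<Phi> = (\<Sum>t\<in>T. kron (router (\<phi> t)) (router (\<phi> t)))"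
    and mA: "map_A (\<lambda>\<sigma>. Lambda (ptrace2 \<sigma>)) \<Phi> = kron Y (ptrace1 \<Phi>)"
    and t: "t \<in> T"
  shows "Lambda (ptrace2 (router (\<phi> t))) = trace (router (\<phi> t)) *\<^sub>R Y"
proof -
  define G where "G = (\<lambda>\<sigma> :: real^('n \<times> 'k)^('n \<times> 'k). Lambda (ptrace2 \<sigma>) - trace \<sigma> *\<^sub>R Y)"
  have linG: "linear G" unfolding G_def by (rule linear_G[OF lin])
  define R where "R t = router (\<phi> t)" for t
  define B where "B q q' = (\<chi> p p'. \<Phi> $ (p, q) $ (p', q'))" for q q'
  have B: "B q q' = (\<Sum>t\<in>T. R t $ q $ q' *\<^sub>R R t)" for q q'
    unfolding B_def dec R_def by (simp add: vec_eq_iff sum_component kron_def mult.commute)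
  have GB: "G (B q q') = 0" for q q'
  proof -
    have "G (B q q') $ i $ j = 0" for i j
    proof -
      have "map_A (\<lambda>\<sigma>. Lambda (ptrace2 \<sigma>)) \<Phi> $ (i,q) $ (j,q') = kron Y (ptrace1 \<Phi>) $ (i,q) $ (j,q')"
        using mA by simp
      moreover have "ptrace1 \<Phi> $ q $ q' = trace (B q q')" by (simp add: ptrace1_def trace_def B_def)
      ultimately have "Lambda (ptrace2 (B q q')) $ i $ j = Y $ i $ j * trace (B q q')"
        by (simp add: map_A_def kron_def B_def)
      thus ?thesis by (simp add: G_def)
    qed
    thus ?thesis by (simp add: vec_eq_iff)
  qed
  have GB2: "(\<Sum>t\<in>T. R t $ q $ q' * G (R t) $ i $ j) = 0" for q q' i j
  proof -
    have "G (B q q') = (\<Sum>t\<in>T. R t $ q $ q' *\<^sub>R G (R t))"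
      unfolding B linear_sum[OF linG] linear_cmul[OF linG] ..
    hence "(\<Sum>t\<in>T. R t $ q $ q' *\<^sub>R G (R t)) $ i $ j = 0" using GB by simp
    thus ?thesis by (simp add: sum_component)
  qed
  have GR: "G (R t) $ i $ j = (\<Sum>q\<in>UNIV. \<Sum>q'\<in>UNIV. R t $ q $ q' * G (Emat q q') $ i $ j)" for t i j
  proof -
    have "G (R t) = (\<Sum>q\<in>UNIV. \<Sum>q'\<in>UNIV. R t $ q $ q' *\<^sub>R G (Emat q q'))"
      by (subst mat_expand[of "R t"]) (simp add: linear_sum[OF linG] linear_cmul[OF linG])
    thus ?thesis by (simp add: sum_component)
  qed
  have zero: "G (R t) $ i $ j = 0" for i j
  proof -
    have "(\<Sum>t\<in>T. (G (R t) $ i $ j)^2) = (\<Sum>t\<in>T. G (R t) $ i $ j * (\<Sum>q\<in>UNIV. \<Sum>q'\<in>UNIV. R t $ q $ q' * G (Emat q q') $ i $ j))"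
      by (intro sum.cong refl) (metis GR power2_eq_square)
    also have "\<dots> = (\<Sum>q\<in>UNIV. \<Sum>q'\<in>UNIV. G (Emat q q') $ i $ j * (\<Sum>t\<in>T. R t $ q $ q' * G (R t) $ i $ j))"
      by (simp add: sum_distrib_left sum_distrib_right mult_ac sum.swap[of _ T])
    also have "\<dots> = 0" by (simp add: GB2)
    finally have "(\<Sum>t\<in>T. (G (R t) $ i $ j)^2) = 0" .
    hence "(G (R t) $ i $ j)^2 = 0" using fin t by (simp add: sum_nonneg_eq_0_iff)
    thus ?thesis by simp
  qed
  hence "G (R t) = 0" by (simp add: vec_eq_iff)
  thus ?thesis unfolding G_def R_def by simp
qed

lemma trace_sum: "trace (\<Sum>t\<in>T. f t) = (\<Sum>t\<in>T. trace (f t :: real^'p::finite^'p))"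
  by (simp add: trace_def sum_component) (rule sum.swap)

lemma mult_sum: "A ** (\<Sum>t\<in>T. f t) = (\<Sum>t\<in>T. A ** (f t :: real^'q::finite^'p::finite))"
  for A :: "real^'p^'r::finite"
  by (simp add: vec_eq_iff matrix_matrix_mult_def sum_component sum_distrib_left sum.swap[where A=UNIV and B=T])

lemma psd_gram: "psd_real (F ** transpose F)" for F :: "real^'k::finite^'n::finite"
  unfolding psd_real_def
proof (intro conjI allI)
  show "transpose (F ** transpose F) = F ** transpose F"
    by (simp add: matrix_transpose_mul)
  fix x :: "real^'n"
  have "x \<bullet> ((F ** transpose F) *v x) = (x v* F) \<bullet> (transpose F *v x)"
    by (simp add: matrix_vector_mul_assoc[symmetric] dot_lmul_matrix)
  also have "\<dots> = (transpose F *v x) \<bullet> (transpose F *v x)" by simp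
  finally show "0 \<le> x \<bullet> ((F ** transpose F) *v x)" by simp
qed

lemma trace_router: "trace (router v) = (\<Sum>u\<in>UNIV. (v$u)^2)"
  by (simp add: trace_def router_def power2_eq_square)

lemma conic_to_primal:
  fixes X :: "real^'n::finite^'n" and Lambda :: "real^'n^'n \<Rightarrow> real^'m::finite^'m"
    and Y :: "real^'m^'m"
    and \<Phi> :: "real^((('n \<times> 'k::finite) \<times> ('n \<times> 'k)))^((('n \<times> 'k) \<times> ('n \<times> 'k)))"
  assumes lin: "linear Lambda" and sep: "cmat \<Phi> \<in> SEP" and tr: "trace \<Phi> = 1"
    and sw: "swap_op ** \<Phi> = \<Phi>" and ptA: "ptransA \<Phi> = \<Phi>"
    and mA: "map_A (\<lambda>\<sigma>. Lambda (ptrace2 \<sigma>)) \<Phi> = kron Y (ptrace1 \<Phi>)"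
  shows "\<exists>\<rho>. Lambda \<rho> = Y \<and> trace \<rho> = 1 \<and> psd_real \<rho> \<and> rank \<rho> \<le> CARD('k) \<and>
     trace (kron (kron X (mat 1 :: real^'k^'k)) (mat 1 :: real^('n \<times> 'k)^('n \<times> 'k)) ** \<Phi>) \<le> trace (X ** \<rho>)"
proof -
  obtain T :: "(nat \<times> nat \<times> nat) set" and x y where fin: "finite T"
    and d1: "cmat \<Phi> = (\<Sum>t\<in>T. couter (tensor (x t) (y t)))"
    using sep_decomp[OF sep] by blast
  obtain z :: "nat \<times> nat \<times> nat \<Rightarrow> complex^('n \<times> 'k)" where d2: "cmat \<Phi> = (\<Sum>t\<in>T. couter (tensor (z t) (z t)))"
    using conic_sym_decomp[OF fin d1 sw] by blast
  obtain \<phi> :: "nat \<times> nat \<times> nat \<Rightarrow> real^('n \<times> 'k)" where d3: "\<Phi> = (\<Sum>t\<in>T. kron (router (\<phi> t)) (router (\<phi> t)))"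
    using real_decomp[OF fin d2 ptA] by blast
  define R where "R t = router (\<phi> t)" for t
  define s where "s t = trace (R t)" for t
  have s0: "0 \<le> s t" for t by (simp add: s_def R_def trace_router sum_nonneg)
  have LC: "Lambda (ptrace2 (R t)) = s t *\<^sub>R Y" if "t \<in> T" for t
    using lambda_constraint[OF lin fin d3 mA that] by (simp add: R_def s_def)
  have d4: "\<Phi> = (\<Sum>t\<in>T. kron (R t) (R t))" using d3 by (simp add: R_def)
  define h where "h t = trace (X ** ptrace2 (R t))" for t
  have obj: "trace (kron (kron X (mat 1 :: real^'k^'k)) (mat 1 :: real^('n \<times> 'k)^('n \<times> 'k)) ** \<Phi>) = (\<Sum>t\<in>T. h t * s t)"
    unfolding d4 mult_sum trace_sum kron_mult trace_kron trace_kron_id matrix_mul_lid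
    by (simp add: h_def s_def)
  have trs: "(\<Sum>t\<in>T. s t * s t) = 1" using tr unfolding d4 trace_sum trace_kron s_def .
  define T' where "T' = {t\<in>T. s t > 0}"
  have finT': "finite T'" using fin by (simp add: T'_def)
  have T'ne: "T' \<noteq> {}"
  proof
    assume "T' = {}"
    hence "\<forall>t\<in>T. s t = 0" using s0 unfolding T'_def by (metis (mono_tags, lifting) empty_Collect_eq less_eq_real_def)
    hence "(\<Sum>t\<in>T. s t * s t) = 0" by simp
    thus False using trs by simp
  qed
  define g where "g t = h t / s t" for t
  define m where "m = Max (g ` T')"
  have "m \<in> g ` T'" unfolding m_def using finT' T'ne by (intro Max_in) auto
  then obtain t0 where t0: "t0 \<in> T'" and mt0: "m = g t0" by blast
  have gm: "g t \<le> m" if "t \<in> T'" for t unfolding m_def using finT' that by (intro Max_ge) auto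
  have sT0: "s t0 > 0" "t0 \<in> T" using t0 by (auto simp: T'_def)
  have "(\<Sum>t\<in>T. h t * s t) = (\<Sum>t\<in>T'. h t * s t)"
    unfolding T'_def by (rule sum.mono_neutral_right[OF fin]) (use s0 in \<open>auto simp: less_eq_real_def\<close>)
  also have "\<dots> = (\<Sum>t\<in>T'. g t * (s t * s t))"
    by (intro sum.cong refl) (auto simp: g_def T'_def)
  also have "\<dots> \<le> (\<Sum>t\<in>T'. m * (s t * s t))"
    by (intro sum_mono mult_right_mono gm) auto
  also have "\<dots> = m * (\<Sum>t\<in>T'. s t * s t)" by (simp add: sum_distrib_left)
  also have "(\<Sum>t\<in>T'. s t * s t) = (\<Sum>t\<in>T. s t * s t)"
    unfolding T'_def by (rule sum.mono_neutral_left[OF fin]) (use s0 in \<open>auto simp: less_eq_real_def\<close>)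
  finally have objle: "(\<Sum>t\<in>T. h t * s t) \<le> m" using trs by simp
  define sq where "sq = sqrt (s t0)"
  have sq0: "sq > 0" using sT0 by (simp add: sq_def)
  have sqsq: "sq * sq = s t0" using sT0 by (simp add: sq_def)
  define F :: "real^'k^'n" where "F = (\<chi> i l. \<phi> t0 $ (i,l) / sq)"
  define \<rho> where "\<rho> = F ** transpose F"
  have rho: "\<rho> = (1 / s t0) *\<^sub>R ptrace2 (R t0)"
  proof -
    have "\<rho> $ i $ j = ((1 / s t0) *\<^sub>R ptrace2 (R t0)) $ i $ j" for i j
    proof -
      have "\<rho> $ i $ j = (\<Sum>l\<in>UNIV. \<phi> t0 $ (i,l) * \<phi> t0 $ (j,l) / (sq * sq))"
        by (simp add: \<rho>_def F_def matrix_matrix_mult_def transpose_def)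
      also have "\<dots> = ((1 / s t0) *\<^sub>R ptrace2 (R t0)) $ i $ j"
        unfolding sqsq by (simp add: ptrace2_def R_def router_def sum_divide_distrib)
      finally show ?thesis .
    qed
    thus ?thesis by (simp add: vec_eq_iff)
  qed
  have f1: "Lambda \<rho> = Y"
    unfolding rho linear_cmul[OF lin] LC[OF sT0(2)] using sT0 by simp
  have f2: "trace \<rho> = 1"
  proof -
    have "trace \<rho> = (1 / s t0) * trace (ptrace2 (R t0))" unfolding rho by (simp add: trace_def sum_distrib_left)
    also have "\<dots> = 1" unfolding trace_ptrace2 s_def[symmetric] using sT0 by simp
    finally show ?thesis .
  qed
  have f3: "psd_real \<rho>" unfolding \<rho>_def by (rule psd_gram)
  have f4: "rank \<rho> \<le> CARD('k)"
  proof -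
    have "rank \<rho> \<le> rank F" unfolding \<rho>_def by (rule rank_mul_le_left)
    also have "\<dots> \<le> CARD('k)" using rank_bound[of F] by simp
    finally show ?thesis .
  qed
  have f5: "trace (X ** \<rho>) = m"
  proof -
    have "trace (X ** \<rho>) = (1 / s t0) * h t0"
      unfolding rho h_def by (simp add: trace_def matrix_matrix_mult_def sum_distrib_left mult_ac)
    thus ?thesis unfolding mt0 g_def by simp
  qed
  show ?thesis using f1 f2 f3 f4 f5 obj objle by auto
qed

theorem theorem3:
  fixes X :: "real^'n^'n" and Lambda :: "real^'n^'n \<Rightarrow> real^'m^'m"
    and Y :: "real^'m^'m"
    and Ktype :: "'k::finite itself"
  assumes "transpose X = X"
    and "linear Lambda"
  shows
   "Sup (ereal ` {trace (X ** \<rho>) | \<rho>. Lambda \<rho> = Y \<and> trace \<rho> = 1 \<and> psd_real \<rho> \<and>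
                                     rank \<rho> \<le> CARD('k)})
  = Sup (ereal ` {trace (kron (kron X (mat 1 :: real^'k^'k)) (mat 1 :: real^('n \<times> 'k)^('n \<times> 'k)) ** \<Phi>)
          | \<Phi>. cmat \<Phi> \<in> SEP \<and> trace \<Phi> = 1 \<and> swap_op ** \<Phi> = \<Phi> \<and> ptransA \<Phi> = \<Phi> \<and>
               map_A (\<lambda>\<sigma>. Lambda (ptrace2 \<sigma>)) \<Phi> = kron Y (ptrace1 \<Phi>)})"
  (is "Sup (ereal ` ?P) = Sup (ereal ` ?C)")
proof (rule antisym)
  have "?P \<subseteq> ?C"
  proof
    fix p assume "p \<in> ?P"
    then obtain \<rho> where p: "p = trace (X ** \<rho>)" and feas: "Lambda \<rho> = Y" "trace \<rho> = 1" "psd_real \<rho>" "rank \<rho> \<le> CARD('k)"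
      by blast
    obtain \<Phi> where h: "trace (kron (kron X (mat 1 :: real^'k^'k)) (mat 1 :: real^('n \<times> 'k)^('n \<times> 'k)) ** \<Phi>) = trace (X ** \<rho>)"
      "cmat \<Phi> \<in> SEP" "trace \<Phi> = 1" "swap_op ** \<Phi> = \<Phi>" "ptransA \<Phi> = \<Phi>"
      "map_A (\<lambda>\<sigma>. Lambda (ptrace2 \<sigma>)) \<Phi> = kron Y (ptrace1 \<Phi>)"
      using primal_to_conic[OF assms(2) feas, of X] by blast
    have h1: "p = trace (kron (kron X (mat 1 :: real^'k^'k)) (mat 1 :: real^('n \<times> 'k)^('n \<times> 'k)) ** \<Phi>)"
      using h(1) p by simp
    show "p \<in> ?C" using h1 h(2-6) by blast
  qed
  thus "Sup (ereal ` ?P) \<le> Sup (ereal ` ?C)" by (intro Sup_subset_mono image_mono)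
next
  show "Sup (ereal ` ?C) \<le> Sup (ereal ` ?P)"
  proof (rule Sup_least)
    fix e assume "e \<in> ereal ` ?C"
    then obtain \<Phi> where e: "e = ereal (trace (kron (kron X (mat 1 :: real^'k^'k)) (mat 1 :: real^('n \<times> 'k)^('n \<times> 'k)) ** \<Phi>))"
      and feas: "cmat \<Phi> \<in> SEP" "trace \<Phi> = 1" "swap_op ** \<Phi> = \<Phi>" "ptransA \<Phi> = \<Phi>"
        "map_A (\<lambda>\<sigma>. Lambda (ptrace2 \<sigma>)) \<Phi> = kron Y (ptrace1 \<Phi>)"
      by blast
    obtain \<rho> where r: "Lambda \<rho> = Y" "trace \<rho> = 1" "psd_real \<rho>" "rank \<rho> \<le> CARD('k)"
      and le: "trace (kron (kron X (mat 1 :: real^'k^'k)) (mat 1 :: real^('n \<times> 'k)^('n \<times> 'k)) ** \<Phi>) \<le> trace (X ** \<rho>)"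
      using conic_to_primal[OF assms(2) feas] by blast
    have "trace (X ** \<rho>) \<in> ?P" using r by blast
    hence "ereal (trace (X ** \<rho>)) \<le> Sup (ereal ` ?P)" by (intro Sup_upper imageI)
    thus "e \<le> Sup (ereal ` ?P)" using le unfolding e by (meson ereal_less_eq(3) order_trans)
  qed
qed


end
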